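(* Let $\mathbb{F}\in\{\mathbb{R},\mathbb{C}\}$, $A\in\mathbb{F}^{m\times n}$, $b\in\mathbb{F}^m$, $\mu>0$, and let $N\ge1$ be an integer with $\beta_N>0$. Let $x'$ be a stationary point of $\mathcal{K}_{reg}$, set $z'=(I-A^*A)x'+A^*b$, and assume that $$|z'_i|\notin\Big[\beta_N^2\sqrt{\mu},\ \frac{\sqrt{\mu}}{\beta_N^2}\Big]\quad\text{for all }i\in\{1,\dots,n\}$$ (this condition is automatically fulfilled if $\beta_N>1$, the interval then being empty). If $x''\neq x'$ is another stationary point of $\mathcal{K}_{reg}$, then $\mathrm{card}(x''-x')>N$.
   Context: $\mathrm{card}(x)$ is the number of nonzero entries; $\beta_k=\inf\{\|Ax\|_2/\|x\|_2:x\ne0,\ \mathrm{card}(x)\le k\}$. $\mathcal{K}_{reg}(x)=\mathcal{Q}_2(\mu\,\mathrm{card})(x)+\|Ax-b\|_2^2$ with $\mathcal{Q}_2(\mu\,\mathrm{card})(x)=\sum_{j=1}^n\big(\mu-(\max\{\sqrt{\mu}-|x_j|,0\})^2\big)$. $A^*$ is the conjugate transpose, $\langle x,y\rangle=\sum_i x_i\overline{y_i}$. A stationary point of a function $g$ is a point $x$ with $0$ in the Fréchet subdifferential $\hat\partial g(x)$, i.e. the set of $v$ with $\liminf_{y\to x,y\ne x}(g(y)-g(x)-\mathrm{Re}\langle v,y-x\rangle)/\|y-x\|\ge0$. *)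

theory Defs
  imports "HOL-Analysis.Analysis"
begin

text \<open>Vectors in F^n are 'a^'n, matrices in F^(m x n) are 'a^'n^'m, with
  'a = real or 'a = complex. The scalar conjugation is passed explicitly
  (id for real, cnj for complex).  For both scalar types the library inner
  product x \<bullet> y on 'a^'n equals Re (sum_i x_i * conj y_i), and norm is the
  Euclidean 2-norm.\<close>

definition card_nz :: "'a::zero^'n \<Rightarrow> nat" where
  "card_nz x = card {i. x $ i \<noteq> 0}"

definition adjoint_mat :: "('a \<Rightarrow> 'a) \<Rightarrow> 'a^'n^'m \<Rightarrow> 'a^'m^'n" where
  "adjoint_mat cj A = (\<chi> i j. cj (A $ j $ i))"

definition beta_k :: "'a::real_normed_field^'n^'m \<Rightarrow> nat \<Rightarrow> real" where
  "beta_k A k = Inf {norm (A *v x) / norm x | x. x \<noteq> 0 \<and> card_nz x \<le> k}"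

definition Q2_card :: "real \<Rightarrow> 'a::real_normed_vector^'n \<Rightarrow> real" where
  "Q2_card \<mu> x = (\<Sum>j\<in>UNIV. \<mu> - (max (sqrt \<mu> - norm (x $ j)) 0)^2)"

definition K_reg :: "real \<Rightarrow> 'a::real_normed_field^'n^'m \<Rightarrow> 'a^'m \<Rightarrow> 'a^'n \<Rightarrow> real" where
  "K_reg \<mu> A b x = Q2_card \<mu> x + (norm (A *v x - b))^2"

definition frechet_subdiff :: "('v::real_inner \<Rightarrow> real) \<Rightarrow> 'v \<Rightarrow> 'v set" where
  "frechet_subdiff g x = {v. Liminf (at x)
      (\<lambda>y. ereal ((g y - g x - v \<bullet> (y - x)) / norm (y - x))) \<ge> 0}"

definition stationary :: "('v::real_inner \<Rightarrow> real) \<Rightarrow> 'v \<Rightarrow> bool" where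
  "stationary g x \<longleftrightarrow> 0 \<in> frechet_subdiff g x"

end

theory Submission
  imports Defs
begin


definition SR :: "real \<Rightarrow> 'v::real_inner \<Rightarrow> 'v \<Rightarrow> bool" where
 "SR \<mu> x z \<longleftrightarrow> (x = 0 \<longrightarrow> norm z \<le> sqrt \<mu>) \<and>
    (x \<noteq> 0 \<and> norm x < sqrt \<mu> \<longrightarrow> z = (sqrt \<mu> / norm x) *\<^sub>R x) \<and>
    (norm x \<ge> sqrt \<mu> \<longrightarrow> z = x)"

lemma SR_nz:
  assumes "SR \<mu> x z" "x \<noteq> 0"
  shows "z = (max (sqrt \<mu>) (norm x) / norm x) *\<^sub>R x"
  using assms unfolding SR_def
  by (cases "norm x < sqrt \<mu>") (auto simp: max_def)

lemma SR_mono: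
  fixes x y z w :: "'v::real_inner"
  assumes "SR \<mu> x z" "SR \<mu> y w"
  shows "(w - z) \<bullet> (y - x) \<ge> 0"
proof (cases "x = 0")
  case x: True
  show ?thesis
  proof (cases "y = 0")
    case True thus ?thesis using x by simp
  next
    case False
    have w: "w = (max (sqrt \<mu>) (norm y) / norm y) *\<^sub>R y" using SR_nz assms(2) False by blast
    have "w \<bullet> y = max (sqrt \<mu>) (norm y) * norm y" using False
      by (simp add: w power2_norm_eq_inner[symmetric] power2_eq_square)
    moreover have "z \<bullet> y \<le> sqrt \<mu> * norm y"
      using norm_cauchy_schwarz[of z y] assms(1) x unfolding SR_def
      by (meson mult_right_mono norm_ge_zero order_trans)
    moreover have "sqrt \<mu> * norm y \<le> max (sqrt \<mu>) (norm y) * norm y"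
      by (simp add: mult_right_mono)
    ultimately show ?thesis using x by (simp add: inner_diff_left)
  qed
next
  case xnz: False
  have z: "z = (max (sqrt \<mu>) (norm x) / norm x) *\<^sub>R x" using SR_nz assms(1) xnz by blast
  show ?thesis
  proof (cases "y = 0")
    case y: True
    have "z \<bullet> x = max (sqrt \<mu>) (norm x) * norm x" using xnz
      by (simp add: z power2_norm_eq_inner[symmetric] power2_eq_square)
    moreover have "w \<bullet> x \<le> sqrt \<mu> * norm x"
      using norm_cauchy_schwarz[of w x] assms(2) y unfolding SR_def
      by (meson mult_right_mono norm_ge_zero order_trans)
    moreover have "sqrt \<mu> * norm x \<le> max (sqrt \<mu>) (norm x) * norm x"
      by (simp add: mult_right_mono)
    ultimately show ?thesis using y by (simp add: inner_diff_left inner_diff_right)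
  next
    case ynz: False
    have w: "w = (max (sqrt \<mu>) (norm y) / norm y) *\<^sub>R y" using SR_nz assms(2) ynz by blast
    define a where "a = max (sqrt \<mu>) (norm x) / norm x"
    define b where "b = max (sqrt \<mu>) (norm y) / norm y"
    have a0: "a \<ge> 0" "b \<ge> 0" unfolding a_def b_def by (simp_all add: le_max_iff_disj)
    have "(w - z) \<bullet> (y - x) = b * (y \<bullet> y) + a * (x \<bullet> x) - (a + b) * (x \<bullet> y)"
      unfolding z w a_def[symmetric] b_def[symmetric]
      by (simp add: inner_diff_left inner_diff_right inner_commute algebra_simps)
    also have "\<dots> \<ge> b * (norm y * norm y) + a * (norm x * norm x) - (a + b) * (norm x * norm y)"
      using mult_left_mono[OF norm_cauchy_schwarz[of x y], of "a+b"] a0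
      by (simp add: power2_norm_eq_inner[symmetric] power2_eq_square)
    moreover have "b * (norm y * norm y) + a * (norm x * norm x) - (a + b) * (norm x * norm y)
       = (max (sqrt \<mu>) (norm y) - max (sqrt \<mu>) (norm x)) * (norm y - norm x)"
      using xnz ynz unfolding a_def b_def by (simp add: field_simps)
    moreover have "(max (sqrt \<mu>) (norm y) - max (sqrt \<mu>) (norm x)) * (norm y - norm x) \<ge> 0"
      by (cases "norm y \<le> norm x") (auto intro!: mult_nonneg_nonneg mult_nonpos_nonpos simp: max_def)
    ultimately show ?thesis by linarith
  qed
qed

lemma SR_norm_ge:
  assumes "SR \<mu> x z" "x \<noteq> 0"
  shows "norm z = max (sqrt \<mu>) (norm x)"
  using SR_nz[OF assms] assms(2) by (simp add: le_max_iff_disj)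

lemma SR_strict:
  fixes x y z w :: "'v::real_inner"
  assumes sx: "SR \<mu> x z" and sy: "SR \<mu> y w" and mu: "\<mu> > 0" and g: "0 < \<gamma>" "\<gamma> \<le> 1"
    and gap: "\<not> (\<gamma> * sqrt \<mu> \<le> norm z \<and> norm z \<le> sqrt \<mu> / \<gamma>)" and ne: "y \<noteq> x"
  shows "(w - z) \<bullet> (y - x) > (1 - \<gamma>) * norm (y - x) ^ 2"
proof -
  have sm: "sqrt \<mu> > 0" using mu by simp
  show ?thesis
  proof (cases "norm z < \<gamma> * sqrt \<mu>")
    case True
    have "\<gamma> * sqrt \<mu> \<le> sqrt \<mu>" using g sm by (intro mult_left_le_one_le) auto
    hence zs: "norm z < sqrt \<mu>" using True by linarith
    have x0: "x = 0"
    proof (rule ccontr)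
      assume "x \<noteq> 0" thus False using SR_norm_ge[OF sx] zs by simp
    qed
    have ynz: "y \<noteq> 0" using ne x0 by simp
    have w: "w = (max (sqrt \<mu>) (norm y) / norm y) *\<^sub>R y" using SR_nz sy ynz by blast
    have wy: "w \<bullet> y = max (sqrt \<mu>) (norm y) * norm y" using ynz
      by (simp add: w power2_norm_eq_inner[symmetric] power2_eq_square)
    have ny: "norm y > 0" using ynz by simp
    have zy: "z \<bullet> y < \<gamma> * sqrt \<mu> * norm y"
      using norm_cauchy_schwarz[of z y] mult_strict_right_mono[OF True ny] by linarith
    have key: "max (sqrt \<mu>) (norm y) * norm y - \<gamma> * sqrt \<mu> * norm y \<ge> (1 - \<gamma>) * norm y ^ 2"
    proof (cases "norm y \<le> sqrt \<mu>")
      case True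
      have "(1 - \<gamma>) * (norm y * norm y) \<le> (1 - \<gamma>) * (sqrt \<mu> * norm y)"
        using True g by (intro mult_left_mono mult_right_mono) auto
      thus ?thesis using True by (simp add: max_def power2_eq_square algebra_simps)
    next
      case False
      have "\<gamma> * (sqrt \<mu> * norm y) \<le> \<gamma> * (norm y * norm y)"
        using False g by (intro mult_left_mono mult_right_mono) auto
      thus ?thesis using False by (simp add: max_def power2_eq_square algebra_simps)
    qed
    show ?thesis using wy zy key x0 by (simp add: inner_diff_left)
  next
    case False
    hence zbig: "norm z > sqrt \<mu> / \<gamma>" using gap by linarith
    have "sqrt \<mu> / \<gamma> \<ge> sqrt \<mu>" using g sm by (simp add: le_divide_eq)
    hence zs: "norm z > sqrt \<mu>" using zbig by linarith
    have xnz: "x \<noteq> 0" using sx zs unfolding SR_def by force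
    have xs: "norm x \<ge> sqrt \<mu>"
    proof (rule ccontr)
      assume "\<not> ?thesis" thus False using SR_norm_ge[OF sx xnz] zs by simp
    qed
    have zx: "z = x" using sx xs unfolding SR_def by blast
    have gx: "\<gamma> * norm x > sqrt \<mu>" using zbig zx g by (simp add: divide_less_eq mult.commute)
    show ?thesis
    proof (cases "y = 0")
      case y0: True
      have "w \<bullet> x \<le> sqrt \<mu> * norm x"
        using norm_cauchy_schwarz[of w x] sy y0 unfolding SR_def
        by (meson mult_right_mono norm_ge_zero order_trans)
      moreover have "\<gamma> * norm x * norm x > sqrt \<mu> * norm x" using gx xnz by simp
      ultimately show ?thesis using y0 zx
        by (simp add: inner_diff_left inner_diff_right power2_norm_eq_inner[symmetric] power2_eq_square algebra_simps)
    next
      case ynz: False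
      show ?thesis
      proof (cases "norm y \<ge> sqrt \<mu>")
        case True
        hence "w = y" using sy unfolding SR_def by blast
        moreover have "norm (y - x) > 0" using ne by simp
        ultimately show ?thesis using zx g
          by (simp add: power2_norm_eq_inner[symmetric] power2_eq_square)
      next
        case False
        hence w: "w = (sqrt \<mu> / norm y) *\<^sub>R y" using sy ynz unfolding SR_def by auto
        define k where "k = sqrt \<mu> / norm y - 1"
        have ny: "norm y > 0" using ynz by simp
        have k0: "k > 0" unfolding k_def using False ny by (simp add: field_simps)
        have wy: "w - y = k *\<^sub>R y" unfolding w k_def by (simp add: algebra_simps)
        have e1: "(w - z) \<bullet> (y - x) = k * (y \<bullet> y - y \<bullet> x) + norm (y - x) ^ 2"
        proof -
          have "w - z = k *\<^sub>R y + (y - x)" using wy zx by (simp add: algebra_simps)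
          thus ?thesis by (simp add: inner_add_left inner_diff_right power2_norm_eq_inner right_diff_distrib)
        qed
        have "y \<bullet> x \<le> norm y * norm x" by (rule norm_cauchy_schwarz)
        hence "k * (y \<bullet> y - y \<bullet> x) \<ge> k * (norm y * norm y - norm y * norm x)"
          using k0 by (intro mult_left_mono) (auto simp: power2_norm_eq_inner[symmetric] power2_eq_square)
        also have "k * (norm y * norm y - norm y * norm x) = - (sqrt \<mu> - norm y) * (norm x - norm y)"
          unfolding k_def using ny by (simp add: field_simps)
        finally have e2: "k * (y \<bullet> y - y \<bullet> x) \<ge> - (sqrt \<mu> - norm y) * (norm x - norm y)" .
        have dxy: "norm x - norm y > 0" using False xs by linarith
        have "\<gamma> * norm y \<le> norm y" using g by (intro mult_left_le_one_le) auto
        hence "sqrt \<mu> - norm y < \<gamma> * (norm x - norm y)"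
          using gx by (simp add: right_diff_distrib)
        hence e3: "(sqrt \<mu> - norm y) * (norm x - norm y) < \<gamma> * (norm x - norm y) ^ 2"
          using dxy by (simp add: power2_eq_square)
        have "norm x - norm y \<le> norm (y - x)"
          by (metis norm_minus_commute norm_triangle_ineq2)
        hence "(norm x - norm y) ^ 2 \<le> norm (y - x) ^ 2" using dxy by (intro power_mono) auto
        hence "\<gamma> * (norm x - norm y) ^ 2 \<le> \<gamma> * norm (y - x) ^ 2" using g by simp
        thus ?thesis using e1 e2 e3 by (simp add: algebra_simps)
      qed
    qed
  qed
qed

lemma norm_add_ub:
  fixes x w :: "'v::real_inner"
  assumes x: "x \<noteq> 0" and t: "0 \<le> t" "t * norm w \<le> norm x"
  shows "norm (x + t *\<^sub>R w) \<le> norm x + t * ((x \<bullet> w) / norm x) + t^2 * ((norm w)^2 / (2 * norm x))"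
proof -
  define s where "s = norm x"
  define a where "a = (x \<bullet> w) / s"
  define b where "b = (norm w)^2 / (2 * s)"
  have s0: "s > 0" using x s_def by simp
  have "- (x \<bullet> w) \<le> s * norm w"
    using norm_cauchy_schwarz[of "-x" w] unfolding s_def by simp
  hence am: "a \<ge> - norm w" unfolding a_def using s0 by (simp add: field_simps)
  have b0: "b \<ge> 0" unfolding b_def using s0 by simp
  have "t * a \<ge> - (t * norm w)" using mult_left_mono[OF am t(1)] by simp
  moreover have "t^2 * b \<ge> 0" using b0 by simp
  ultimately have R0: "s + t * a + t^2 * b \<ge> 0" using t(2) unfolding s_def by linarith
  have sa: "s * a = x \<bullet> w" unfolding a_def using s0 by simp
  have sb: "2 * s * b = (norm w)^2" unfolding b_def using s0 by simp
  have "(s + t * a + t^2 * b)^2 = s^2 + 2 * t * (s * a) + t^2 * (2 * s * b) + (t * a + t^2 * b)^2"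
    by (simp add: power2_eq_square algebra_simps)
  also have "\<dots> = s^2 + 2 * t * (x \<bullet> w) + t^2 * (norm w)^2 + (t * a + t^2 * b)^2"
    using sa sb by simp
  finally have R2: "(s + t * a + t^2 * b)^2 \<ge> s^2 + 2 * t * (x \<bullet> w) + t^2 * (norm w)^2" by simp
  have "(norm (x + t *\<^sub>R w))^2 = s^2 + 2 * t * (x \<bullet> w) + t^2 * (norm w)^2"
    unfolding s_def power2_norm_eq_inner
    by (simp add: inner_add_left inner_add_right inner_commute power2_eq_square algebra_simps)
  hence "(norm (x + t *\<^sub>R w))^2 \<le> (s + t * a + t^2 * b)^2" using R2 by simp
  hence "norm (x + t *\<^sub>R w) \<le> s + t * a + t^2 * b" using R0 by (rule power2_le_imp_le)
  thus ?thesis unfolding s_def a_def b_def .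
qed

lemma L1:
  fixes g :: "'v::real_inner \<Rightarrow> real"
  assumes st: "stationary g x" and e: "\<epsilon> > 0"
  shows "\<exists>\<delta>>0. \<forall>y. y \<noteq> x \<and> dist y x < \<delta> \<longrightarrow> g y - g x > - \<epsilon> * norm (y - x)"
proof -
  have "0 \<le> Liminf (at x) (\<lambda>y. ereal ((g y - g x - 0 \<bullet> (y - x)) / norm (y - x)))"
    using st unfolding stationary_def frechet_subdiff_def by simp
  hence H: "\<forall>c<0. eventually (\<lambda>y. c < ereal ((g y - g x - 0 \<bullet> (y - x)) / norm (y - x))) (at x)"
    unfolding le_Liminf_iff .
  have "ereal (- \<epsilon>) < 0" using e by simp
  from H[rule_format, OF this]
  have "eventually (\<lambda>y. ereal (- \<epsilon>) < ereal ((g y - g x - 0 \<bullet> (y - x)) / norm (y - x))) (at x)" .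
  hence "eventually (\<lambda>y. - \<epsilon> < (g y - g x) / norm (y - x)) (at x)" by simp
  then obtain d where d: "d > 0" "\<forall>y. y \<noteq> x \<and> dist y x < d \<longrightarrow> - \<epsilon> < (g y - g x) / norm (y - x)"
    unfolding eventually_at by auto
  show ?thesis
  proof (intro exI[of _ d] conjI allI impI)
    fix y assume y: "y \<noteq> x \<and> dist y x < d"
    hence n: "norm (y - x) > 0" by simp
    have "- \<epsilon> < (g y - g x) / norm (y - x)" using d y by blast
    thus "g y - g x > - \<epsilon> * norm (y - x)" using n by (simp add: less_divide_eq)
  qed (use d in auto)
qed

lemma L1':
  fixes g :: "'v::real_inner \<Rightarrow> real"
  assumes st: "stationary g x" and en: "e \<noteq> 0" and ep: "\<epsilon> > 0"
  shows "\<exists>\<delta>>0. \<forall>t. 0 < t \<and> t < \<delta> \<longrightarrow> g (x + t *\<^sub>R e) - g x > - \<epsilon> * t"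
proof -
  have ne: "norm e > 0" using en by simp
  obtain d where d: "d > 0" "\<forall>y. y \<noteq> x \<and> dist y x < d \<longrightarrow> g y - g x > - (\<epsilon> / norm e) * norm (y - x)"
    using L1[OF st, of "\<epsilon> / norm e"] ep ne by auto
  show ?thesis
  proof (intro exI[of _ "d / norm e"] conjI allI impI)
    show "d / norm e > 0" using d ne by simp
    fix t assume t: "0 < t \<and> t < d / norm e"
    have "dist (x + t *\<^sub>R e) x = t * norm e" using t by (simp add: dist_norm)
    also have "\<dots> < d" using t ne by (simp add: less_divide_eq)
    finally have dd: "dist (x + t *\<^sub>R e) x < d" .
    have "x + t *\<^sub>R e \<noteq> x" using t en by simp
    hence "g (x + t *\<^sub>R e) - g x > - (\<epsilon> / norm e) * norm ((x + t *\<^sub>R e) - x)"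
      using d(2) dd by blast
    also have "- (\<epsilon> / norm e) * norm ((x + t *\<^sub>R e) - x) = - \<epsilon> * t"
      using t ne by simp
    finally show "g (x + t *\<^sub>R e) - g x > - \<epsilon> * t" .
  qed
qed

lemma L2:
  fixes D C :: real
  assumes h: "\<forall>\<epsilon>>0. \<exists>\<delta>>0. \<forall>t. 0 < t \<and> t < \<delta> \<longrightarrow> t * D + t^2 * C \<ge> - \<epsilon> * t"
  shows "D \<ge> 0"
proof (rule ccontr)
  assume "\<not> D \<ge> 0"
  hence D: "D < 0" by simp
  obtain d where d: "d > 0" "\<forall>t. 0 < t \<and> t < d \<longrightarrow> t * D + t^2 * C \<ge> - (- D / 2) * t"
    using h D by (meson half_gt_zero neg_0_less_iff_less)
  define t where "t = (if C \<le> 0 then d / 2 else min (d / 2) (- D / (4 * C)))"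
  have "C > 0 \<Longrightarrow> - D / (4 * C) > 0" using D by (simp add: divide_neg_pos)
  hence t0: "0 < t" "t < d" using d D unfolding t_def by auto
  have "t * D + t^2 * C \<ge> - (- D / 2) * t" using d t0 by blast
  hence "t * (D / 2 + t * C) \<ge> 0" by (simp add: power2_eq_square algebra_simps)
  hence q: "D / 2 + t * C \<ge> 0" using t0 by (simp add: zero_le_mult_iff)
  show False
  proof (cases "C \<le> 0")
    case True
    have "t * C \<le> 0" using True t0 by (simp add: mult_nonneg_nonpos)
    thus False using q D by linarith
  next
    case False
    have "t \<le> - D / (4 * C)" unfolding t_def using False by simp
    hence "t * C \<le> (- D / (4 * C)) * C" using False by (intro mult_right_mono) auto
    also have "\<dots> = - D / 4" using False by simp
    finally have "t * C \<le> - D / 4" .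
    thus False using q D by linarith
  qed
qed



lemma adj_inner:
  fixes A :: "'a::{real_normed_field,real_inner}^'n^'m"
  assumes cj: "\<And>a b c::'a. (a*b) \<bullet> c = b \<bullet> (cj a * c)"
  shows "(A *v d) \<bullet> r = d \<bullet> (adjoint_mat cj A *v r)"
proof -
  have "(A *v d) \<bullet> r = (\<Sum>i\<in>UNIV. \<Sum>k\<in>UNIV. (A$i$k * d$k) \<bullet> r$i)"
    unfolding inner_vec_def matrix_vector_mult_def by (simp add: inner_sum_left)
  also have "\<dots> = (\<Sum>i\<in>UNIV. \<Sum>k\<in>UNIV. d$k \<bullet> (cj (A$i$k) * r$i))"
    using cj by simp
  also have "\<dots> = (\<Sum>k\<in>UNIV. \<Sum>i\<in>UNIV. d$k \<bullet> (cj (A$i$k) * r$i))"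
    by (rule sum.swap)
  also have "\<dots> = d \<bullet> (adjoint_mat cj A *v r)"
    unfolding inner_vec_def matrix_vector_mult_def adjoint_mat_def by (simp add: inner_sum_right)
  finally show ?thesis .
qed

lemma mv_scaleR:
  fixes A :: "'a::real_normed_algebra_1^'n^'m"
  shows "A *v (c *\<^sub>R v) = c *\<^sub>R (A *v v)"
  by (simp add: vec_eq_iff matrix_vector_mult_def scaleR_sum_right)

definition fq :: "real \<Rightarrow> 'a::real_normed_vector \<Rightarrow> real" where
  "fq \<mu> s = \<mu> - (max (sqrt \<mu> - norm s) 0)^2"

lemma Q2_fq: "Q2_card \<mu> x = (\<Sum>j\<in>UNIV. fq \<mu> (x $ j))"
  unfolding Q2_card_def fq_def ..

lemma K_dir:
  fixes A :: "'a::{real_normed_field,real_inner}^'n^'m"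
  assumes cj: "\<And>a b c::'a. (a*b) \<bullet> c = b \<bullet> (cj a * c)"
  shows "K_reg \<mu> A b (x + t *\<^sub>R axis j w) - K_reg \<mu> A b x =
     fq \<mu> (x$j + t *\<^sub>R w) - fq \<mu> (x$j) + 2 * t * (w \<bullet> (adjoint_mat cj A *v (A *v x - b))$j)
     + t^2 * (norm (A *v axis j w))^2"
proof -
  define e where "e = axis j w"
  define r where "r = A *v x - b"
  have Q: "Q2_card \<mu> (x + t *\<^sub>R e) - Q2_card \<mu> x = fq \<mu> (x$j + t *\<^sub>R w) - fq \<mu> (x$j)"
  proof -
    have "Q2_card \<mu> (x + t *\<^sub>R e) - Q2_card \<mu> x
        = (\<Sum>i\<in>UNIV. fq \<mu> ((x + t *\<^sub>R e)$i) - fq \<mu> (x$i))"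
      unfolding Q2_fq by (simp add: sum_subtractf)
    also have "\<dots> = (\<Sum>i\<in>UNIV. if i = j then fq \<mu> (x$j + t *\<^sub>R w) - fq \<mu> (x$j) else 0)"
      by (rule sum.cong) (auto simp: e_def axis_def)
    also have "\<dots> = fq \<mu> (x$j + t *\<^sub>R w) - fq \<mu> (x$j)" by simp
    finally show ?thesis .
  qed
  have "A *v (x + t *\<^sub>R e) - b = r + t *\<^sub>R (A *v e)"
    unfolding r_def by (simp add: matrix_vector_right_distrib mv_scaleR)
  hence "(norm (A *v (x + t *\<^sub>R e) - b))^2 - (norm (A *v x - b))^2
       = 2 * t * (r \<bullet> (A *v e)) + t^2 * (norm (A *v e))^2"
    unfolding r_def[symmetric] power2_norm_eq_inner
    by (simp add: inner_add_left inner_add_right inner_commute power2_eq_square algebra_simps)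
  moreover have "r \<bullet> (A *v e) = w \<bullet> (adjoint_mat cj A *v r)$j"
    using adj_inner[OF cj, of A e r] by (simp add: inner_commute e_def inner_axis')
  ultimately show ?thesis using Q unfolding K_reg_def e_def r_def by simp
qed

lemma fq_le_mu: "fq \<mu> s \<le> \<mu>" unfolding fq_def by simp

lemma fq_big: "norm s \<ge> sqrt \<mu> \<Longrightarrow> fq \<mu> s = \<mu>" unfolding fq_def by simp

lemma fq_mid: "\<mu> \<ge> 0 \<Longrightarrow> norm s \<le> sqrt \<mu> \<Longrightarrow> fq \<mu> s = 2 * sqrt \<mu> * norm s - (norm s)^2"
  unfolding fq_def by (simp add: power2_diff)

lemma fq_ub0: assumes "\<mu> \<ge> 0" shows "fq \<mu> s \<le> 2 * sqrt \<mu> * norm s"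
proof (cases "norm s \<le> sqrt \<mu>")
  case True thus ?thesis using fq_mid[OF assms True] by simp
next
  case False
  have "\<mu> = sqrt \<mu> * sqrt \<mu>" using assms by simp
  also have "\<dots> \<le> 2 * sqrt \<mu> * norm s" using False
  proof -
    have "sqrt \<mu> * sqrt \<mu> \<le> sqrt \<mu> * norm s" using False assms by (intro mult_left_mono) auto
    moreover have "sqrt \<mu> * norm s \<ge> 0" using assms by simp
    ultimately show ?thesis by linarith
  qed
  finally show ?thesis using fq_le_mu[of \<mu> s] by linarith
qed

lemma DIR:
  fixes A :: "'a::{real_normed_field,real_inner}^'n^'m"
  assumes cj: "\<And>a b c::'a. (a*b) \<bullet> c = b \<bullet> (cj a * c)"
    and st: "stationary (K_reg \<mu> A b) x" and w: "w \<noteq> 0" and d0: "\<delta>0 > 0"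
    and bnd: "\<forall>t. 0 < t \<and> t < \<delta>0 \<longrightarrow> fq \<mu> (x$j + t *\<^sub>R w) - fq \<mu> (x$j) \<le> t * a + t^2 * C"
  shows "a + 2 * (w \<bullet> (adjoint_mat cj A *v (A *v x - b))$j) \<ge> 0"
proof -
  define p where "p = (adjoint_mat cj A *v (A *v x - b))$j"
  define n where "n = (norm (A *v axis j w))^2"
  have en: "axis j w \<noteq> 0" using w by simp
  have "\<forall>\<epsilon>>0. \<exists>\<delta>>0. \<forall>t. 0 < t \<and> t < \<delta> \<longrightarrow> t * (a + 2 * (w \<bullet> p)) + t^2 * (C + n) \<ge> - \<epsilon> * t"
  proof (intro allI impI)
    fix \<epsilon> :: real assume ep: "\<epsilon> > 0"
    obtain d1 where d1: "d1 > 0" "\<forall>t. 0 < t \<and> t < d1 \<longrightarrow> K_reg \<mu> A b (x + t *\<^sub>R axis j w) - K_reg \<mu> A b x > - \<epsilon> * t"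
      using L1'[OF st en ep] by blast
    show "\<exists>\<delta>>0. \<forall>t. 0 < t \<and> t < \<delta> \<longrightarrow> t * (a + 2 * (w \<bullet> p)) + t^2 * (C + n) \<ge> - \<epsilon> * t"
    proof (intro exI[of _ "min d1 \<delta>0"] conjI allI impI)
      show "min d1 \<delta>0 > 0" using d1 d0 by simp
      fix t assume t: "0 < t \<and> t < min d1 \<delta>0"
      have "- \<epsilon> * t < K_reg \<mu> A b (x + t *\<^sub>R axis j w) - K_reg \<mu> A b x" using d1 t by simp
      also have "\<dots> = fq \<mu> (x$j + t *\<^sub>R w) - fq \<mu> (x$j) + 2 * t * (w \<bullet> p) + t^2 * n"
        unfolding p_def n_def by (rule K_dir[OF cj])
      also have "\<dots> \<le> t * a + t^2 * C + 2 * t * (w \<bullet> p) + t^2 * n" using bnd t by simp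
      finally show "t * (a + 2 * (w \<bullet> p)) + t^2 * (C + n) \<ge> - \<epsilon> * t"
        by (simp add: algebra_simps)
    qed
  qed
  from L2[OF this] show ?thesis unfolding p_def .
qed

lemma stat_SR:
  fixes A :: "'a::{real_normed_field,real_inner}^'n^'m"
  assumes cj: "\<And>a b c::'a. (a*b) \<bullet> c = b \<bullet> (cj a * c)"
    and mu: "\<mu> > 0" and st: "stationary (K_reg \<mu> A b) x"
  shows "SR \<mu> (x$j) ((x - adjoint_mat cj A *v (A *v x) + adjoint_mat cj A *v b)$j)"
proof -
  define p where "p = (adjoint_mat cj A *v (A *v x - b))$j"
  have zj: "(x - adjoint_mat cj A *v (A *v x) + adjoint_mat cj A *v b)$j = x$j - p"
    unfolding p_def by (simp add: matrix_vector_mult_diff_distrib)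
  have sm: "sqrt \<mu> > 0" using mu by simp
  have DIR': "a + 2 * (w \<bullet> p) \<ge> 0" if "w \<noteq> 0" "\<delta>0 > 0"
     "\<forall>t. 0 < t \<and> t < \<delta>0 \<longrightarrow> fq \<mu> (x$j + t *\<^sub>R w) - fq \<mu> (x$j) \<le> t * a + t^2 * C" for w \<delta>0 a C
    using DIR[OF cj st that] unfolding p_def .
  consider (big) "norm (x$j) \<ge> sqrt \<mu>" | (zero) "x$j = 0" | (mid) "x$j \<noteq> 0" "norm (x$j) < sqrt \<mu>"
    by linarith
  thus ?thesis
  proof cases
    case big
    have p0: "p = 0"
    proof (rule ccontr)
      assume pn: "p \<noteq> 0"
      have "0 + 2 * ((- p) \<bullet> p) \<ge> 0"
      proof (rule DIR'[of "-p" 1 0 0])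
        show "\<forall>t. 0 < t \<and> t < 1 \<longrightarrow> fq \<mu> (x$j + t *\<^sub>R (-p)) - fq \<mu> (x$j) \<le> t * 0 + t^2 * 0"
          using fq_big[OF big] fq_le_mu by (simp add: fq_le_mu[of \<mu>])
      qed (use pn in auto)
      hence "p \<bullet> p \<le> 0" by simp
      moreover have "p \<bullet> p > 0" using pn by simp
      ultimately show False by linarith
    qed
    have "x$j \<noteq> 0" using big sm by auto
    thus ?thesis unfolding zj SR_def using big p0 by auto
  next
    case zero
    have "norm p \<le> sqrt \<mu>"
    proof (cases "p = 0")
      case True thus ?thesis using sm by simp
    next
      case pn: False
      have "2 * sqrt \<mu> * norm p + 2 * ((- p) \<bullet> p) \<ge> 0"
      proof (rule DIR'[of "-p" 1 _ 0])
        show "\<forall>t. 0 < t \<and> t < 1 \<longrightarrow> fq \<mu> (x$j + t *\<^sub>R (-p)) - fq \<mu> (x$j) \<le> t * (2 * sqrt \<mu> * norm p) + t^2 * 0"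
        proof (intro allI impI)
          fix t :: real assume t: "0 < t \<and> t < 1"
          have "fq \<mu> (t *\<^sub>R (-p)) \<le> 2 * sqrt \<mu> * norm (t *\<^sub>R (-p))" by (rule fq_ub0) (use mu in simp)
          moreover have "fq \<mu> (0::'a) = 0" unfolding fq_def using mu by simp
          ultimately show "fq \<mu> (x$j + t *\<^sub>R (-p)) - fq \<mu> (x$j) \<le> t * (2 * sqrt \<mu> * norm p) + t^2 * 0"
            using zero t by (simp add: ac_simps)
        qed
      qed (use pn in auto)
      hence "norm p * norm p \<le> sqrt \<mu> * norm p"
        by (simp add: power2_norm_eq_inner[symmetric] power2_eq_square)
      thus ?thesis using pn by simp
    qed
    thus ?thesis unfolding zj SR_def using zero sm by auto
  next
    case mid
    define s where "s = norm (x$j)"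
    have s0: "s > 0" using mid s_def by simp
    define v where "v = (sqrt \<mu> / s - 1) *\<^sub>R x$j + p"
    have v0: "v = 0"
    proof (rule ccontr)
      assume vn: "v \<noteq> 0"
      define w where "w = - v"
      have wn: "norm w > 0" using vn w_def by simp
      define a where "a = 2 * sqrt \<mu> * ((x$j \<bullet> w) / s) - 2 * (x$j \<bullet> w)"
      define C where "C = 2 * sqrt \<mu> * ((norm w)^2 / (2 * s)) - (norm w)^2"
      have "a + 2 * (w \<bullet> p) \<ge> 0"
      proof (rule DIR'[of w "min (s / norm w) ((sqrt \<mu> - s) / norm w)" a C])
        show "w \<noteq> 0" using wn by simp
        show "min (s / norm w) ((sqrt \<mu> - s) / norm w) > 0" using s0 wn mid s_def by simp
        show "\<forall>t. 0 < t \<and> t < min (s / norm w) ((sqrt \<mu> - s) / norm w) \<longrightarrow>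
            fq \<mu> (x$j + t *\<^sub>R w) - fq \<mu> (x$j) \<le> t * a + t^2 * C"
        proof (intro allI impI)
          fix t :: real assume t: "0 < t \<and> t < min (s / norm w) ((sqrt \<mu> - s) / norm w)"
          have t1: "t * norm w < s" using t wn by (simp add: less_divide_eq)
          have t2: "t * norm w < sqrt \<mu> - s" using t wn by (simp add: less_divide_eq)
          have "norm (x$j + t *\<^sub>R w) \<le> s + t * norm w"
            using norm_triangle_ineq[of "x$j" "t *\<^sub>R w"] t s_def by simp
          hence inb: "norm (x$j + t *\<^sub>R w) \<le> sqrt \<mu>" using t2 by linarith
          have ub: "norm (x$j + t *\<^sub>R w) \<le> s + t * ((x$j \<bullet> w) / s) + t^2 * ((norm w)^2 / (2 * s))"
            using norm_add_ub[of "x$j" t w] mid t t1 s_def by simp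
          have sq: "(norm (x$j + t *\<^sub>R w))^2 = s^2 + 2 * t * (x$j \<bullet> w) + t^2 * (norm w)^2"
            unfolding s_def power2_norm_eq_inner
            by (simp add: inner_add_left inner_add_right inner_commute power2_eq_square algebra_simps)
          have "fq \<mu> (x$j + t *\<^sub>R w) - fq \<mu> (x$j)
              = 2 * sqrt \<mu> * norm (x$j + t *\<^sub>R w) - (norm (x$j + t *\<^sub>R w))^2 - (2 * sqrt \<mu> * s - s^2)"
            using fq_mid[OF _ inb] fq_mid[of \<mu> "x$j"] mu mid s_def by simp
          also have "\<dots> \<le> 2 * sqrt \<mu> * (s + t * ((x$j \<bullet> w) / s) + t^2 * ((norm w)^2 / (2 * s)))
                 - (s^2 + 2 * t * (x$j \<bullet> w) + t^2 * (norm w)^2) - (2 * sqrt \<mu> * s - s^2)"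
            using mult_left_mono[OF ub, of "2 * sqrt \<mu>"] sm sq by simp
          also have "\<dots> = t * a + t^2 * C" unfolding a_def C_def by (simp add: algebra_simps)
          finally show "fq \<mu> (x$j + t *\<^sub>R w) - fq \<mu> (x$j) \<le> t * a + t^2 * C" .
        qed
      qed
      moreover have "a + 2 * (w \<bullet> p) = 2 * (w \<bullet> v)"
        unfolding a_def v_def using s0
        by (simp add: inner_add_right inner_commute algebra_simps)
      moreover have "w \<bullet> v < 0" unfolding w_def using vn by simp
      ultimately show False by linarith
    qed
    hence "p = - ((sqrt \<mu> / s - 1) *\<^sub>R x$j)" unfolding v_def by (simp add: eq_neg_iff_add_eq_0 add.commute)
    hence "x$j - p = (sqrt \<mu> / s) *\<^sub>R x$j" by (simp add: algebra_simps)
    thus ?thesis unfolding zj SR_def using mid s_def by auto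
  qed
qed



lemma beta_le:
  fixes A :: "'a::real_normed_field^'n^'m"
  assumes "d \<noteq> 0" "card_nz d \<le> N"
  shows "beta_k A N * norm d \<le> norm (A *v d)"
proof -
  have "beta_k A N \<le> norm (A *v d) / norm d"
    unfolding beta_k_def
  proof (rule cInf_lower)
    show "norm (A *v d) / norm d \<in> {norm (A *v x) / norm x |x. x \<noteq> 0 \<and> card_nz x \<le> N}"
      using assms by blast
    show "bdd_below {norm (A *v x) / norm x |x. x \<noteq> 0 \<and> card_nz x \<le> N}"
      by (rule bdd_belowI[of _ 0]) auto
  qed
  thus ?thesis using assms by (simp add: le_divide_eq)
qed

lemma main_gen:
  fixes A :: "'a::{real_normed_field,real_inner}^'n^'m"
  assumes cj: "\<And>a b c::'a. (a*b) \<bullet> c = b \<bullet> (cj a * c)"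
    and mu: "\<mu> > 0" and bpos: "beta_k A N > 0"
    and st1: "stationary (K_reg \<mu> A b) x'"
    and gap: "\<forall>i. \<not> (beta_k A N ^ 2 * sqrt \<mu> \<le> norm (((x' - adjoint_mat cj A *v (A *v x')) + adjoint_mat cj A *v b) $ i)
              \<and> norm (((x' - adjoint_mat cj A *v (A *v x')) + adjoint_mat cj A *v b) $ i) \<le> sqrt \<mu> / beta_k A N ^ 2)"
    and st2: "stationary (K_reg \<mu> A b) x''" and ne: "x'' \<noteq> x'"
  shows "card_nz (x'' - x') > N"
proof (rule ccontr)
  assume "\<not> ?thesis"
  hence cN: "card_nz (x'' - x') \<le> N" by simp
  define d where "d = x'' - x'"
  define B where "B = adjoint_mat cj A"
  define z1 where "z1 = (x' - B *v (A *v x')) + B *v b"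
  define z2 where "z2 = (x'' - B *v (A *v x'')) + B *v b"
  define \<beta> where "\<beta> = beta_k A N"
  have dn: "d \<noteq> 0" using ne d_def by simp
  have "\<beta> * norm d \<le> norm (A *v d)" using beta_le[OF dn] cN d_def \<beta>_def by simp
  hence "(\<beta> * norm d)^2 \<le> (norm (A *v d))^2" using bpos \<beta>_def by (intro power_mono) auto
  hence bd: "\<beta>^2 * (d \<bullet> d) \<le> (A *v d) \<bullet> (A *v d)"
    by (simp add: power_mult_distrib power2_norm_eq_inner)
  have "z2 - z1 = d - B *v (A *v d)"
    unfolding z1_def z2_def d_def by (simp add: matrix_vector_mult_diff_distrib algebra_simps)
  hence "(z2 - z1) \<bullet> d = d \<bullet> d - (A *v d) \<bullet> (A *v d)"
    using adj_inner[OF cj, of A d "A *v d"] unfolding B_def by (simp add: inner_diff_left inner_diff_right inner_commute)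
  hence ub: "(z2 - z1) \<bullet> d \<le> (1 - \<beta>^2) * (d \<bullet> d)" using bd by (simp add: algebra_simps)
  have sum: "(z2 - z1) \<bullet> d = (\<Sum>i\<in>UNIV. (z2$i - z1$i) \<bullet> (x''$i - x'$i))"
    unfolding inner_vec_def d_def by simp
  have dd: "d \<bullet> d = (\<Sum>i\<in>UNIV. norm (x''$i - x'$i) ^ 2)"
    unfolding inner_vec_def d_def by (simp add: power2_norm_eq_inner)
  have S1: "SR \<mu> (x'$i) (z1$i)" for i unfolding z1_def B_def by (rule stat_SR[OF cj mu st1])
  have S2: "SR \<mu> (x''$i) (z2$i)" for i unfolding z2_def B_def by (rule stat_SR[OF cj mu st2])
  have dpos: "d \<bullet> d > 0" using dn by simp
  show False
  proof (cases "\<beta>^2 \<le> 1")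
    case True
    have g0: "0 < \<beta>^2" using bpos \<beta>_def by simp
    obtain k where k: "d $ k \<noteq> 0" using dn by (metis vec_eq_iff zero_index)
    have "(\<Sum>i\<in>UNIV. (1 - \<beta>^2) * norm (x''$i - x'$i) ^ 2) < (\<Sum>i\<in>UNIV. (z2$i - z1$i) \<bullet> (x''$i - x'$i))"
    proof (rule sum_strict_mono_ex1)
      show "finite (UNIV :: 'n set)" by simp
      show "\<forall>i\<in>UNIV. (1 - \<beta>^2) * norm (x''$i - x'$i) ^ 2 \<le> (z2$i - z1$i) \<bullet> (x''$i - x'$i)"
      proof
        fix i :: 'n
        show "(1 - \<beta>^2) * norm (x''$i - x'$i) ^ 2 \<le> (z2$i - z1$i) \<bullet> (x''$i - x'$i)"
        proof (cases "x''$i = x'$i")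
          case True thus ?thesis by simp
        next
          case False
          have "\<not> (\<beta>^2 * sqrt \<mu> \<le> norm (z1$i) \<and> norm (z1$i) \<le> sqrt \<mu> / \<beta>^2)"
            using gap unfolding z1_def B_def \<beta>_def by blast
          from SR_strict[OF S1 S2 mu g0 True this False] show ?thesis by simp
        qed
      qed
      have "x''$k \<noteq> x'$k" using k d_def by simp
      moreover have "\<not> (\<beta>^2 * sqrt \<mu> \<le> norm (z1$k) \<and> norm (z1$k) \<le> sqrt \<mu> / \<beta>^2)"
        using gap unfolding z1_def B_def \<beta>_def by blast
      ultimately show "\<exists>i\<in>UNIV. (1 - \<beta>^2) * norm (x''$i - x'$i) ^ 2 < (z2$i - z1$i) \<bullet> (x''$i - x'$i)"
        using SR_strict[OF S1 S2 mu g0 True] by blast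
    qed
    hence "(1 - \<beta>^2) * (d \<bullet> d) < (z2 - z1) \<bullet> d"
      unfolding sum dd by (simp add: sum_distrib_left)
    thus False using ub by linarith
  next
    case False
    have "(\<Sum>i\<in>UNIV. (z2$i - z1$i) \<bullet> (x''$i - x'$i)) \<ge> 0"
      by (rule sum_nonneg) (use SR_mono[OF S1 S2] in blast)
    moreover have "(1 - \<beta>^2) * (d \<bullet> d) < 0" using False dpos by (simp add: mult_neg_pos)
    ultimately show False using ub sum by linarith
  qed
qed


theorem theorem4p2:
  shows
  "(\<forall>(A::real^'n^'m) (b::real^'m) (\<mu>::real) (N::nat) x' x''.
      \<mu> > 0 \<and> N \<ge> 1 \<and> beta_k A N > 0 \<and>
      stationary (K_reg \<mu> A b) x' \<and>
      (\<forall>i. \<not> (beta_k A N ^ 2 * sqrt \<mu> \<le> norm (((x' - adjoint_mat id A *v (A *v x')) + adjoint_mat id A *v b) $ i)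
              \<and> norm (((x' - adjoint_mat id A *v (A *v x')) + adjoint_mat id A *v b) $ i) \<le> sqrt \<mu> / beta_k A N ^ 2)) \<and>
      stationary (K_reg \<mu> A b) x'' \<and> x'' \<noteq> x'
      \<longrightarrow> card_nz (x'' - x') > N)
 \<and> (\<forall>(A::complex^'n^'m) (b::complex^'m) (\<mu>::real) (N::nat) x' x''.
      \<mu> > 0 \<and> N \<ge> 1 \<and> beta_k A N > 0 \<and>
      stationary (K_reg \<mu> A b) x' \<and>
      (\<forall>i. \<not> (beta_k A N ^ 2 * sqrt \<mu> \<le> norm (((x' - adjoint_mat cnj A *v (A *v x')) + adjoint_mat cnj A *v b) $ i)
              \<and> norm (((x' - adjoint_mat cnj A *v (A *v x')) + adjoint_mat cnj A *v b) $ i) \<le> sqrt \<mu> / beta_k A N ^ 2)) \<and>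
      stationary (K_reg \<mu> A b) x'' \<and> x'' \<noteq> x'
      \<longrightarrow> card_nz (x'' - x') > N)"
proof -
  have cr: "\<And>a b c::real. (a*b) \<bullet> c = b \<bullet> (id a * c)" by (simp add: inner_real_def)
  have cc: "\<And>a b c::complex. (a*b) \<bullet> c = b \<bullet> (cnj a * c)" by (simp add: inner_complex_def algebra_simps)
  show ?thesis
    apply (intro conjI allI impI)
     apply (elim conjE)
     apply (rule main_gen[OF cr]; assumption)
    apply (elim conjE)
    apply (rule main_gen[OF cc]; assumption)
    done
qed

end
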